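(* Consider the procurement setting and the mechanism BFM-SWM described in the context, run with arbitrary inputs $B>0$, $\alpha>1$, $\beta>1$, $\epsilon>0$, $\ell\in\{1,2\}$. Then BFM-SWM is budget-feasible, i.e. its output $S^*$ with payments $p(u)$, $u\in S^*$, satisfies $p(S^* )=\sum_{u\in S^*}p(u)\le B$. It is obviously strategyproof (hence truthful), individually rational, and has non-negative auctioneer surplus, i.e. $v(S^* )-p(S^* )\ge 0$. Moreover, treating $\alpha$ as a constant and counting each evaluation of $v$ as one step, it runs in $\mathcal{O}\!\left(n\log\frac{OPT}{\epsilon}\right)$ time, where $OPT=\max\{v(S)-c(S): S\subseteq\mathcal{N},\ c(S)\le B\}$ is the welfare of an optimal solution.
   Context: Setting. $\mathcal{N}$ is a finite set of $n$ sellers, each owning one item. The auctioneer has a valuation $v:2^{\mathcal{N}}\to\mathbb{R}_{\ge 0}$ with $v(\emptyset)=0$ that is submodular (for $X\subseteq Y\subseteq\mathcal{N}$ and $u\notin Y$, $v(u\mid Y)\le v(u\mid X)$), not necessarily monotone, accessed through a value oracle; here $v(S\mid T)=v(S\cup T)-v(T)$, $v(u\mid T)=v(\{u\}\mid T)$ and $v(u)=v(\{u\})$. Each seller $u$ has a private cost $c(u)\ge 0$; $c(X)=\sum_{u\in X}c(u)$, $p(X)=\sum_{u\in X}p(u)$. $B>0$ is the budget, $[\ell]=\{1,\dots,\ell\}$. A seller offered a price $q$ either accepts or rejects; a truthful seller accepts iff $c(u)\le q$. A seller's utility is $p(u)-c(u)$ if it wins with payment $p(u)$ and $0$ otherwise.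 Mechanism BFM-SWM (inputs $B$, $\alpha>1$, $\beta>1$, $\epsilon>0$, $\ell\in\{1,2\}$): 1. Offer every seller the price $B$; let $R$ be the set of sellers who accept, and set $p(u)=B$ for $u\in R$. 2. Set $t=0$, $\rho_0=\epsilon/\alpha$, $u^*=\emptyset$ ($u^*$ is a set of at most one seller), and $S_{i,0}=\emptyset$ for $i\in[\ell]$. 3. Repeat rounds: set $t\leftarrow t+1$, $\rho_t=\alpha\rho_{t-1}$, $S_{i,t}=\emptyset$ for all $i\in[\ell]$. Process the sellers $u\in R\setminus(\bigcup_{i=1}^{\ell}S_{i,t-1}\cup u^* )$ one at a time in a fixed order. For each such $u$: pick $j\in\arg\max_{i\in[\ell]}v(u\mid S_{i,t})$ (current contents); update $p(u)\leftarrow\min\{p(u),\ v(u\mid S_{j,t})/(\beta+\rho_t/B)\}$ and offer $p(u)$ to $u$. If $u$ accepts: if $v(S_{j,t}\cup\{u\})-p(S_{j,t}\cup\{u\})>\rho_t$ (current prices), set $u^*\leftarrow\{u\}$ and end the round immediately; otherwise add $u$ to $S_{j,t}$. If $u$ rejects, remove $u$ from $R$. After the round, stop if $R\setminus\left(\bigcup_{i=1}^{\ell}(S_{i,t-1}\cup S_{i,t})\cup u^*\right)=\emptyset$; otherwise start another round. 4. Let $M$ be the final value of $t$. Output $S^*\in\arg\max_{A\in\{S_{i,t}: i\in[\ell],\ t\in\{M-1,M\}\}\cup\{u^*\}}\big(v(A)-p(A)\big)$, paying each $u\in S^*$ its current price $p(u)$. Obvious strategyproofness: at every point at which a seller's action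 under the truthful strategy differs from its action under some deviating strategy, the worst utility it can obtain by continuing truthfully is at least the best utility it can obtain by deviating (over all behaviours of the other sellers). Individual rationality: a truthful seller never obtains negative utility. *)

theory Defs
  imports Complex_Main "HOL-Library.Sublist"
begin

text \<open>An event of the interaction: (seller offered, price offered, seller accepted?).
  A (behaviour) strategy of a seller maps the public history of all previous events and
  the currently offered price to accept (True) / reject (False).\<close>

type_synonym 'a event = "'a \<times> real \<times> bool"
type_synonym 'a strategy = "'a event list \<Rightarrow> real \<Rightarrow> bool"

definition truthful :: "('a \<Rightarrow> real) \<Rightarrow> 'a \<Rightarrow> 'a strategy" where
  "truthful c u = (\<lambda>h q. c u \<le> q)"

definition marg :: "('a set \<Rightarrow> real) \<Rightarrow> 'a set \<Rightarrow> 'a \<Rightarrow> real" where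
  "marg v S u = v (insert u S) - v S"

definition submodular_on :: "'a set \<Rightarrow> ('a set \<Rightarrow> real) \<Rightarrow> bool" where
  "submodular_on N v \<longleftrightarrow>
     (\<forall>X Y u. X \<subseteq> Y \<longrightarrow> Y \<subseteq> N \<longrightarrow> u \<in> N \<longrightarrow> u \<notin> Y \<longrightarrow> marg v Y u \<le> marg v X u)"

text \<open>State of the mechanism.  stR = R, stp = current prices, stU = u*,
  stPrev i = S_{i,t-1}, stCur i = S_{i,t}, stTrace = history of all offers and answers,
  stSteps = number of elementary steps (value-oracle evaluations and price offers),
  stHalt = "current round has been ended early".\<close>

record 'a mstate =
  stR :: "'a set"
  stp :: "'a \<Rightarrow> real"
  stU :: "'a set"
  stPrev :: "nat \<Rightarrow> 'a set"
  stCur :: "nat \<Rightarrow> 'a set"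
  stTrace :: "'a event list"
  stSteps :: nat
  stHalt :: bool

definition offer_B :: "real \<Rightarrow> ('a \<Rightarrow> 'a strategy) \<Rightarrow> 'a mstate \<Rightarrow> 'a \<Rightarrow> 'a mstate" where
  "offer_B B \<sigma> st u =
     (let a = \<sigma> u (stTrace st) B
      in st\<lparr> stR := (if a then insert u (stR st) else stR st),
             stTrace := stTrace st @ [(u, B, a)],
             stSteps := stSteps st + 1 \<rparr>)"

definition init_state :: "'a list \<Rightarrow> real \<Rightarrow> ('a \<Rightarrow> 'a strategy) \<Rightarrow> 'a mstate" where
  "init_state ord B \<sigma> =
     fold (\<lambda>u st. offer_B B \<sigma> st u) ord
       \<lparr> stR = {}, stp = (\<lambda>_. B), stU = {}, stPrev = (\<lambda>_. {}), stCur = (\<lambda>_. {}),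
         stTrace = [], stSteps = 0, stHalt = False \<rparr>"

text \<open>Each processed seller costs
  2l + 1 oracle evaluations (the l marginals and the surplus test) plus one offer.\<close>

definition process_seller ::
  "('a set \<Rightarrow> real) \<Rightarrow> real \<Rightarrow> real \<Rightarrow> nat \<Rightarrow> real \<Rightarrow> ('a \<Rightarrow> 'a strategy)
     \<Rightarrow> 'a mstate \<Rightarrow> 'a \<Rightarrow> 'a mstate" where
  "process_seller v B \<beta> l \<rho> \<sigma> st u =
     (if stHalt st then st else
      (let S = stCur st;
           m = (\<lambda>i. marg v (S i) u);
           j = (LEAST i. 1 \<le> i \<and> i \<le> l \<and> (\<forall>k. 1 \<le> k \<and> k \<le> l \<longrightarrow> m k \<le> m i));
           q = min (stp st u) (m j / (\<beta> + \<rho> / B));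
           p' = (stp st)(u := q);
           a = \<sigma> u (stTrace st) q;
           st1 = st\<lparr> stp := p', stTrace := stTrace st @ [(u, q, a)],
                     stSteps := stSteps st + 2 * l + 2 \<rparr>
       in if a then
            (if v (insert u (S j)) - sum p' (insert u (S j)) > \<rho>
             then st1\<lparr> stU := {u}, stHalt := True \<rparr>
             else st1\<lparr> stCur := S(j := insert u (S j)) \<rparr>)
          else st1\<lparr> stR := stR st - {u} \<rparr>))"

definition run_round ::
  "('a set \<Rightarrow> real) \<Rightarrow> 'a list \<Rightarrow> real \<Rightarrow> real \<Rightarrow> real \<Rightarrow> real \<Rightarrow> nat \<Rightarrow> ('a \<Rightarrow> 'a strategy)
     \<Rightarrow> nat \<Rightarrow> 'a mstate \<Rightarrow> 'a mstate" where
  "run_round v ord B \<alpha> \<beta> \<epsilon> l \<sigma> t st =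
     (let \<rho> = \<epsilon> / \<alpha> * \<alpha> ^ t;
          todo = filter (\<lambda>u. u \<in> stR st \<and> u \<notin> (\<Union>i\<in>{1..l}. stCur st i) \<and> u \<notin> stU st) ord;
          st0 = st\<lparr> stPrev := stCur st, stCur := (\<lambda>_. {}), stHalt := False \<rparr>
      in fold (\<lambda>u s. process_seller v B \<beta> l \<rho> \<sigma> s u) todo st0)"

primrec rounds ::
  "('a set \<Rightarrow> real) \<Rightarrow> 'a list \<Rightarrow> real \<Rightarrow> real \<Rightarrow> real \<Rightarrow> real \<Rightarrow> nat \<Rightarrow> ('a \<Rightarrow> 'a strategy)
     \<Rightarrow> nat \<Rightarrow> 'a mstate" where
  "rounds v ord B \<alpha> \<beta> \<epsilon> l \<sigma> 0 = init_state ord B \<sigma>"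
| "rounds v ord B \<alpha> \<beta> \<epsilon> l \<sigma> (Suc t) =
     run_round v ord B \<alpha> \<beta> \<epsilon> l \<sigma> (Suc t) (rounds v ord B \<alpha> \<beta> \<epsilon> l \<sigma> t)"

definition stop_cond :: "nat \<Rightarrow> 'a mstate \<Rightarrow> bool" where
  "stop_cond l st \<longleftrightarrow> stR st - ((\<Union>i\<in>{1..l}. stPrev st i \<union> stCur st i) \<union> stU st) = {}"

definition num_rounds ::
  "('a set \<Rightarrow> real) \<Rightarrow> 'a list \<Rightarrow> real \<Rightarrow> real \<Rightarrow> real \<Rightarrow> real \<Rightarrow> nat \<Rightarrow> ('a \<Rightarrow> 'a strategy) \<Rightarrow> nat" where
  "num_rounds v ord B \<alpha> \<beta> \<epsilon> l \<sigma> =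
     (LEAST t. 1 \<le> t \<and> stop_cond l (rounds v ord B \<alpha> \<beta> \<epsilon> l \<sigma> t))"

definition final_state ::
  "('a set \<Rightarrow> real) \<Rightarrow> 'a list \<Rightarrow> real \<Rightarrow> real \<Rightarrow> real \<Rightarrow> real \<Rightarrow> nat \<Rightarrow> ('a \<Rightarrow> 'a strategy) \<Rightarrow> 'a mstate" where
  "final_state v ord B \<alpha> \<beta> \<epsilon> l \<sigma> =
     rounds v ord B \<alpha> \<beta> \<epsilon> l \<sigma> (num_rounds v ord B \<alpha> \<beta> \<epsilon> l \<sigma>)"

definition candidates :: "nat \<Rightarrow> 'a mstate \<Rightarrow> 'a set list" where
  "candidates l st = map (stPrev st) [1..<l+1] @ map (stCur st) [1..<l+1] @ [stU st]"

definition first_argmax :: "('b \<Rightarrow> real) \<Rightarrow> 'b list \<Rightarrow> 'b" where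
  "first_argmax f xs = hd (filter (\<lambda>A. \<forall>A'\<in>set xs. f A' \<le> f A) xs)"

definition winners ::
  "('a set \<Rightarrow> real) \<Rightarrow> 'a list \<Rightarrow> real \<Rightarrow> real \<Rightarrow> real \<Rightarrow> real \<Rightarrow> nat \<Rightarrow> ('a \<Rightarrow> 'a strategy) \<Rightarrow> 'a set" where
  "winners v ord B \<alpha> \<beta> \<epsilon> l \<sigma> =
     (let st = final_state v ord B \<alpha> \<beta> \<epsilon> l \<sigma>
      in first_argmax (\<lambda>A. v A - sum (stp st) A) (candidates l st))"

definition payment ::
  "('a set \<Rightarrow> real) \<Rightarrow> 'a list \<Rightarrow> real \<Rightarrow> real \<Rightarrow> real \<Rightarrow> real \<Rightarrow> nat \<Rightarrow> ('a \<Rightarrow> 'a strategy) \<Rightarrow> 'a \<Rightarrow> real" where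
  "payment v ord B \<alpha> \<beta> \<epsilon> l \<sigma> = stp (final_state v ord B \<alpha> \<beta> \<epsilon> l \<sigma>)"

definition mech_trace ::
  "('a set \<Rightarrow> real) \<Rightarrow> 'a list \<Rightarrow> real \<Rightarrow> real \<Rightarrow> real \<Rightarrow> real \<Rightarrow> nat \<Rightarrow> ('a \<Rightarrow> 'a strategy) \<Rightarrow> 'a event list" where
  "mech_trace v ord B \<alpha> \<beta> \<epsilon> l \<sigma> = stTrace (final_state v ord B \<alpha> \<beta> \<epsilon> l \<sigma>)"

text \<open>Total running time: elementary steps of all rounds plus one oracle evaluation per
  candidate in the final selection.\<close>

definition total_steps ::
  "('a set \<Rightarrow> real) \<Rightarrow> 'a list \<Rightarrow> real \<Rightarrow> real \<Rightarrow> real \<Rightarrow> real \<Rightarrow> nat \<Rightarrow> ('a \<Rightarrow> 'a strategy) \<Rightarrow> nat" where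
  "total_steps v ord B \<alpha> \<beta> \<epsilon> l \<sigma> =
     (let st = final_state v ord B \<alpha> \<beta> \<epsilon> l \<sigma> in stSteps st + length (candidates l st))"

definition seller_util ::
  "('a set \<Rightarrow> real) \<Rightarrow> 'a list \<Rightarrow> real \<Rightarrow> real \<Rightarrow> real \<Rightarrow> real \<Rightarrow> nat \<Rightarrow> ('a \<Rightarrow> real)
     \<Rightarrow> ('a \<Rightarrow> 'a strategy) \<Rightarrow> 'a \<Rightarrow> real" where
  "seller_util v ord B \<alpha> \<beta> \<epsilon> l c \<sigma> u =
     (if u \<in> winners v ord B \<alpha> \<beta> \<epsilon> l \<sigma> then payment v ord B \<alpha> \<beta> \<epsilon> l \<sigma> u - c u else 0)"

definition own_view :: "'a \<Rightarrow> 'a event list \<Rightarrow> 'a event list" where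
  "own_view u h = filter (\<lambda>e. fst e = u) h"

text \<open>Obvious strategyproofness.  A decision point of u is given by the history before the
  offer together with the offered price q.  Two histories are indistinguishable for u if
  u's own view of them coincides.  Whenever u is at such a point both in a run where u
  is truthful (others behave as in \<sigma>1) and in a run where u follows the deviation d
  (others behave as in \<sigma>2), and d's action there differs from the truthful one, the
  truthful utility is at least the deviating one.  Quantifying over all \<sigma>1, \<sigma>2 gives
  "worst truthful \<ge> best deviating".\<close>

definition OSP ::
  "'a set \<Rightarrow> ('a set \<Rightarrow> real) \<Rightarrow> 'a list \<Rightarrow> real \<Rightarrow> real \<Rightarrow> real \<Rightarrow> real \<Rightarrow> nat \<Rightarrow> ('a \<Rightarrow> real) \<Rightarrow> bool" where
  "OSP N v ord B \<alpha> \<beta> \<epsilon> l c \<longleftrightarrow>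
     (\<forall>u\<in>N. \<forall>d \<sigma>1 \<sigma>2 h1 h2 q b1 b2.
        prefix (h1 @ [(u, q, b1)]) (mech_trace v ord B \<alpha> \<beta> \<epsilon> l (\<sigma>1(u := truthful c u))) \<and>
        prefix (h2 @ [(u, q, b2)]) (mech_trace v ord B \<alpha> \<beta> \<epsilon> l (\<sigma>2(u := d))) \<and>
        own_view u h1 = own_view u h2 \<and>
        d h2 q \<noteq> truthful c u h1 q
        \<longrightarrow> seller_util v ord B \<alpha> \<beta> \<epsilon> l c (\<sigma>2(u := d)) u
              \<le> seller_util v ord B \<alpha> \<beta> \<epsilon> l c (\<sigma>1(u := truthful c u)) u)"

definition OPT :: "'a set \<Rightarrow> ('a set \<Rightarrow> real) \<Rightarrow> ('a \<Rightarrow> real) \<Rightarrow> real \<Rightarrow> real" where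
  "OPT N v c B = Max {v S - sum c S | S. S \<subseteq> N \<and> sum c S \<le> B}"

definition valid_instance ::
  "'a set \<Rightarrow> 'a list \<Rightarrow> ('a set \<Rightarrow> real) \<Rightarrow> ('a \<Rightarrow> real) \<Rightarrow> real \<Rightarrow> real \<Rightarrow> real \<Rightarrow> real \<Rightarrow> nat \<Rightarrow> bool" where
  "valid_instance N ord v c B \<alpha> \<beta> \<epsilon> l \<longleftrightarrow>
     distinct ord \<and> set ord = N \<and>
     v {} = 0 \<and> (\<forall>S\<subseteq>N. 0 \<le> v S) \<and> submodular_on N v \<and>
     (\<forall>u\<in>N. 0 \<le> c u) \<and>
     0 < B \<and> 1 < \<alpha> \<and> 1 < \<beta> \<and> 0 < \<epsilon> \<and> l \<in> {1, 2}"

end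

theory Submission
  imports Defs
begin


definition TRok :: "('a \<Rightarrow> 'a strategy) \<Rightarrow> 'a event list \<Rightarrow> bool" where
  "TRok \<sigma> tr \<longleftrightarrow> (\<forall>k<length tr. snd (snd (tr!k)) = \<sigma> (fst (tr!k)) (take k tr) (fst (snd (tr!k))))"

lemma TRok_prefix: "prefix tr tr' \<Longrightarrow> TRok \<sigma> tr' \<Longrightarrow> TRok \<sigma> tr"
proof -
  assume p: "prefix tr tr'" and t: "TRok \<sigma> tr'"
  from p obtain zs where tr': "tr' = tr @ zs" by (auto simp: prefix_def)
  show ?thesis unfolding TRok_def
  proof (intro allI impI)
    fix k assume k: "k < length tr"
    then have "snd (snd (tr'!k)) = \<sigma> (fst (tr'!k)) (take k tr') (fst (snd (tr'!k)))"
      using t tr' unfolding TRok_def by auto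
    then show "snd (snd (tr!k)) = \<sigma> (fst (tr!k)) (take k tr) (fst (snd (tr!k)))"
      using k tr' by (simp add: nth_append)
  qed
qed

lemma TRok_append1:
  "TRok \<sigma> (tr @ [(u,q,a)]) \<longleftrightarrow> TRok \<sigma> tr \<and> a = \<sigma> u tr q"
proof
  assume t: "TRok \<sigma> (tr @ [(u,q,a)])"
  have "TRok \<sigma> tr" by (rule TRok_prefix[OF _ t]) simp
  moreover have "a = \<sigma> u tr q"
    using t unfolding TRok_def by (auto dest: spec[of _ "length tr"])
  ultimately show "TRok \<sigma> tr \<and> a = \<sigma> u tr q" by simp
next
  assume t: "TRok \<sigma> tr \<and> a = \<sigma> u tr q"
  show "TRok \<sigma> (tr @ [(u,q,a)])" unfolding TRok_def
  proof (intro allI impI)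
    fix k assume k: "k < length (tr @ [(u,q,a)])"
    show "snd (snd ((tr @ [(u,q,a)])!k)) = \<sigma> (fst ((tr @ [(u,q,a)])!k)) (take k (tr @ [(u,q,a)])) (fst (snd ((tr @ [(u,q,a)])!k)))"
    proof (cases "k < length tr")
      case True then show ?thesis using t unfolding TRok_def by (simp add: nth_append)
    next
      case False then have "k = length tr" using k by simp
      then show ?thesis using t by simp
    qed
  qed
qed

lemma first_argmax_mem:
  fixes f :: "'b \<Rightarrow> real"
  assumes "xs \<noteq> []"
  shows "first_argmax f xs \<in> set xs \<and> (\<forall>A\<in>set xs. f A \<le> f (first_argmax f xs))"
proof -
  have fin: "finite (f ` set xs)" by simp
  have ne: "f ` set xs \<noteq> {}" using assms by simp
  obtain A0 where A0: "A0 \<in> set xs" "f A0 = Max (f ` set xs)"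
    using Max_in[OF fin ne] by auto
  have "\<forall>A'\<in>set xs. f A' \<le> f A0" using A0 fin by auto
  then have "filter (\<lambda>A. \<forall>A'\<in>set xs. f A' \<le> f A) xs \<noteq> []"
    using A0(1) by (auto simp: filter_empty_conv)
  then have "hd (filter (\<lambda>A. \<forall>A'\<in>set xs. f A' \<le> f A) xs) \<in> set (filter (\<lambda>A. \<forall>A'\<in>set xs. f A' \<le> f A) xs)"
    by (rule hd_in_set)
  then show ?thesis unfolding first_argmax_def by auto
qed

lemma least_j:
  fixes f :: "nat \<Rightarrow> real"
  assumes "1 \<le> l" "l \<le> 2"
  shows "(LEAST i. 1 \<le> i \<and> i \<le> l \<and> (\<forall>k. 1 \<le> k \<and> k \<le> l \<longrightarrow> f k \<le> f i)) \<in> {1..l}"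
proof -
  have "\<exists>i. 1 \<le> i \<and> i \<le> l \<and> (\<forall>k. 1 \<le> k \<and> k \<le> l \<longrightarrow> f k \<le> f i)"
  proof (cases "l = 1")
    case True then show ?thesis by (intro exI[of _ 1]) auto
  next
    case False then have l2: "l = 2" using assms by auto
    show ?thesis
    proof (cases "f 2 \<le> f 1")
      case True
      have "\<And>k. 1 \<le> k \<and> k \<le> l \<Longrightarrow> k = 1 \<or> k = 2" using l2 by arith
      then show ?thesis using l2 True by (intro exI[of _ 1]) auto
    next
      case False
      have k12: "\<And>k. 1 \<le> k \<and> k \<le> l \<Longrightarrow> k = 1 \<or> k = 2" using l2 by arith
      have "\<forall>k. 1 \<le> k \<and> k \<le> l \<longrightarrow> f k \<le> f 2"
      proof (intro allI impI)
        fix k assume "1 \<le> k \<and> k \<le> l"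
        then have "k = 1 \<or> k = 2" by (rule k12)
        then show "f k \<le> f 2" using False by auto
      qed
      then show ?thesis using l2 by (intro exI[of _ 2]) auto
    qed
  qed
  from LeastI_ex[OF this] show ?thesis by auto
qed


lemma div_ge_neg: fixes m d :: real assumes "m < 0" "1 < d" shows "m \<le> m / d"
proof -
  have "m * 1 \<le> m * (1/d) * d" using assms by simp
  have "m / d - m = m * (1 - d) / d" using assms by (simp add: field_simps)
  moreover have "m * (1 - d) / d \<ge> 0" using assms by (intro divide_nonneg_pos mult_nonpos_nonpos) auto
  ultimately show ?thesis by simp
qed

lemma div_le_pos: fixes m d :: real assumes "0 \<le> m" "1 \<le> d" shows "m / d \<le> m"
proof -
  have "m \<le> d*m" using mult_right_mono[OF assms(2) assms(1)] by simp
  then show ?thesis using assms by (simp add: divide_le_eq mult.commute)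
qed
  
lemma budget_aux:
  fixes P V \<beta> \<rho> B :: real
  assumes "1 < \<beta>" "0 < \<rho>" "0 < B" "(\<beta> + \<rho>/B) * P \<le> V" "V - P \<le> \<rho>"
  shows "P \<le> B"
proof (rule ccontr)
  assume "\<not> P \<le> B"
  then have PB: "B < P" by simp
  then have P0: "0 < P" using assms by simp
  have e: "(\<beta> + \<rho>/B) * P = \<beta> * P + \<rho> * (P / B)" by (simp add: field_simps)
  have "1 < P / B" using PB assms by simp
  then have "\<rho> < \<rho> * (P / B)" using mult_strict_left_mono[OF _ assms(2)] by fastforce
  moreover have "P < \<beta> * P" using P0 assms by simp
  ultimately have "P + \<rho> < (\<beta> + \<rho>/B) * P" using e by linarith
  then show False using assms by linarith
qed

locale bfm =
  fixes N :: "'a set" and ord :: "'a list" and v :: "'a set \<Rightarrow> real" and c :: "'a \<Rightarrow> real"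
    and B \<alpha> \<beta> \<epsilon> :: real and l :: nat
  assumes valid: "valid_instance N ord v c B \<alpha> \<beta> \<epsilon> l"
begin

lemma dist: "distinct ord" and setord: "set ord = N" and finN: "finite N"
  and v0: "v {} = 0" and vnn: "\<And>S. S \<subseteq> N \<Longrightarrow> 0 \<le> v S" and sub: "submodular_on N v"
  and cnn: "\<And>u. u \<in> N \<Longrightarrow> 0 \<le> c u" and Bpos: "0 < B" and al: "1 < \<alpha>" and be: "1 < \<beta>"
  and eps: "0 < \<epsilon>" and l1: "1 \<le> l" and l2: "l \<le> 2"
  using valid unfolding valid_instance_def by auto

definition Vmax :: real where "Vmax = Max (v ` Pow N)"

lemma Vmax_ge: "S \<subseteq> N \<Longrightarrow> v S \<le> Vmax"
  unfolding Vmax_def using finN by (intro Max_ge) auto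

lemma Vmax_nn: "0 \<le> Vmax"
  using Vmax_ge[of "{}"] v0 by simp

lemma OPT_ge: "S \<subseteq> N \<Longrightarrow> sum c S \<le> B \<Longrightarrow> v S - sum c S \<le> OPT N v c B"
  unfolding OPT_def
  by (rule Max_ge) (use finN in auto)

lemma submod_single: "S \<subseteq> N \<Longrightarrow> u \<in> N \<Longrightarrow> u \<notin> S \<Longrightarrow> v (insert u S) - v S \<le> v {u}"
  using sub v0 unfolding submodular_on_def marg_def
  by (metis empty_subsetI insert_absorb2 insert_is_Un sup_bot.right_neutral diff_zero)

definition Sets :: "'a mstate \<Rightarrow> 'a set" where
  "Sets s = stU s \<union> (\<Union>i\<in>{1..l}. stCur s i \<union> stPrev s i)"

definition INV :: "real \<Rightarrow> 'a set \<Rightarrow> ('a \<Rightarrow> 'a strategy) \<Rightarrow> 'a mstate \<Rightarrow> 'a list \<Rightarrow> bool" where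
  "INV \<rho> X \<sigma> s xs \<longleftrightarrow>
    (\<forall>i. stCur s i \<subseteq> N \<and> stPrev s i \<subseteq> N) \<and> stU s \<subseteq> N \<and> stR s \<subseteq> N \<and>
    (\<forall>w. - Vmax \<le> stp s w \<and> stp s w \<le> B) \<and>
    (\<forall>i\<in>{1..l}. (\<beta> + \<rho>/B) * sum (stp s) (stCur s i) \<le> v (stCur s i) \<and>
        v (stCur s i) - sum (stp s) (stCur s i) \<le> \<rho>) \<and>
    (\<forall>i\<in>{1..l}. sum (stp s) (stPrev s i) \<le> B) \<and>
    (stU s = {} \<or> (\<exists>w. stU s = {w} \<and> stp s w \<le> v {w})) \<and>
    TRok \<sigma> (stTrace s) \<and>
    (\<forall>e\<in>set (stTrace s). stp s (fst e) \<le> fst (snd e)) \<and>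
    (\<forall>w q. (w, q, False) \<in> set (stTrace s) \<longrightarrow> w \<notin> stR s \<and> w \<notin> Sets s) \<and>
    (\<forall>w\<in>X. w \<in> Sets s \<longrightarrow> c w \<le> stp s w) \<and>
    distinct xs \<and> (\<forall>w\<in>set xs. w \<in> stR s \<and> w \<notin> Sets s) \<and>
    (stHalt s \<longrightarrow> \<rho> < Vmax * (1 + real (card N)) \<and> (N \<subseteq> X \<longrightarrow> \<rho> < 2 * OPT N v c B))"

end


context bfm begin

lemma INV_unpack:
  assumes "INV \<rho> X \<sigma> s xs"
  shows "(\<forall>i. stCur s i \<subseteq> N \<and> stPrev s i \<subseteq> N)" "stU s \<subseteq> N" "stR s \<subseteq> N"
    "\<forall>w. - Vmax \<le> stp s w \<and> stp s w \<le> B"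
    "\<forall>i\<in>{1..l}. (\<beta> + \<rho>/B) * sum (stp s) (stCur s i) \<le> v (stCur s i) \<and>
        v (stCur s i) - sum (stp s) (stCur s i) \<le> \<rho>"
    "\<forall>i\<in>{1..l}. sum (stp s) (stPrev s i) \<le> B"
    "stU s = {} \<or> (\<exists>w. stU s = {w} \<and> stp s w \<le> v {w})"
    "TRok \<sigma> (stTrace s)"
    "\<forall>e\<in>set (stTrace s). stp s (fst e) \<le> fst (snd e)"
    "\<forall>w q. (w, q, False) \<in> set (stTrace s) \<longrightarrow> w \<notin> stR s \<and> w \<notin> Sets s"
    "\<forall>w\<in>X. w \<in> Sets s \<longrightarrow> c w \<le> stp s w"
    "distinct xs" "\<forall>w\<in>set xs. w \<in> stR s \<and> w \<notin> Sets s"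
    "stHalt s \<longrightarrow> \<rho> < Vmax * (1 + real (card N)) \<and> (N \<subseteq> X \<longrightarrow> \<rho> < 2 * OPT N v c B)"
  using assms unfolding INV_def by blast+

lemma INV_I:
  assumes "(\<forall>i. stCur s i \<subseteq> N \<and> stPrev s i \<subseteq> N)" "stU s \<subseteq> N" "stR s \<subseteq> N"
    "\<forall>w. - Vmax \<le> stp s w \<and> stp s w \<le> B"
    "\<forall>i\<in>{1..l}. (\<beta> + \<rho>/B) * sum (stp s) (stCur s i) \<le> v (stCur s i) \<and>
        v (stCur s i) - sum (stp s) (stCur s i) \<le> \<rho>"
    "\<forall>i\<in>{1..l}. sum (stp s) (stPrev s i) \<le> B"
    "stU s = {} \<or> (\<exists>w. stU s = {w} \<and> stp s w \<le> v {w})"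
    "TRok \<sigma> (stTrace s)"
    "\<forall>e\<in>set (stTrace s). stp s (fst e) \<le> fst (snd e)"
    "\<forall>w q. (w, q, False) \<in> set (stTrace s) \<longrightarrow> w \<notin> stR s \<and> w \<notin> Sets s"
    "\<forall>w\<in>X. w \<in> Sets s \<longrightarrow> c w \<le> stp s w"
    "distinct xs" "\<forall>w\<in>set xs. w \<in> stR s \<and> w \<notin> Sets s"
    "stHalt s \<longrightarrow> \<rho> < Vmax * (1 + real (card N)) \<and> (N \<subseteq> X \<longrightarrow> \<rho> < 2 * OPT N v c B)"
  shows "INV \<rho> X \<sigma> s xs"
  using assms unfolding INV_def by blast

lemma step:
  assumes I: "INV \<rho> X \<sigma> s (u # xs)" and rho: "0 < \<rho>" and Xt: "\<forall>w\<in>X. \<sigma> w = truthful c w"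
  shows "INV \<rho> X \<sigma> (process_seller v B \<beta> l \<rho> \<sigma> s u) xs"
proof (cases "stHalt s")
  case True
  then have "process_seller v B \<beta> l \<rho> \<sigma> s u = s" unfolding process_seller_def by simp
  with I show ?thesis unfolding INV_def by auto
next
  case False
  define S where "S = stCur s"
  define j where "j = (LEAST i. 1 \<le> i \<and> i \<le> l \<and> (\<forall>k. 1 \<le> k \<and> k \<le> l \<longrightarrow> marg v (S k) u \<le> marg v (S i) u))"
  define m where "m = marg v (S j) u"
  define dd where "dd = \<beta> + \<rho> / B"
  define q where "q = min (stp s u) (m / dd)"
  define p' where "p' = (stp s)(u := q)"
  define a where "a = \<sigma> u (stTrace s) q"
  define st1 where "st1 = s\<lparr>stp := p', stTrace := stTrace s @ [(u, q, a)], stSteps := stSteps s + 2 * l + 2\<rparr>"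
  have eq: "process_seller v B \<beta> l \<rho> \<sigma> s u =
     (if a then (if v (insert u (S j)) - sum p' (insert u (S j)) > \<rho>
                 then st1\<lparr>stU := {u}, stHalt := True\<rparr>
                 else st1\<lparr>stCur := S(j := insert u (S j))\<rparr>)
      else st1\<lparr>stR := stR s - {u}\<rparr>)"
    using False unfolding process_seller_def Let_def S_def j_def m_def dd_def q_def p'_def a_def st1_def
    by simp
  note U = INV_unpack[OF I]
  have uR: "u \<in> stR s" and uS: "u \<notin> Sets s" using U(13) by auto
  have uN: "u \<in> N" using uR U(3) by auto
  have jl: "j \<in> {1..l}" unfolding j_def using least_j[where f="\<lambda>i. marg v (S i) u", OF l1 l2] by simp
  have uSj: "u \<notin> S j" using uS jl unfolding Sets_def S_def by auto
  have SjN: "S j \<subseteq> N" using U(1) unfolding S_def by auto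
  have finSj: "finite (S j)" using SjN finN finite_subset by auto
  have dd1: "1 < dd" unfolding dd_def using be rho Bpos
    by (smt (verit) divide_pos_pos)
  have mge: "- Vmax \<le> m"
    using vnn[of "insert u (S j)"] Vmax_ge[OF SjN] SjN uN unfolding m_def marg_def by auto
  have mle: "m \<le> v {u}" using submod_single[OF SjN uN uSj] unfolding m_def marg_def .
  have qle: "q \<le> m / dd" "q \<le> stp s u" unfolding q_def by auto
  have qge: "- Vmax \<le> q"
  proof -
    have "- Vmax \<le> m / dd"
    proof (cases "m < 0")
      case True then show ?thesis using div_ge_neg[OF True dd1] mge by linarith
    next
      case False then have "0 \<le> m / dd" using dd1 by simp
      then show ?thesis using Vmax_nn by linarith
    qed
    then show ?thesis using U(4) unfolding q_def by auto
  qed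
  have qB: "q \<le> B" using qle U(4) by (meson order_trans)
  have qv: "q \<le> v {u}"
  proof (cases "m < 0")
    case True
    have "m / dd < 0" using True dd1 by (simp add: divide_neg_pos)
    then show ?thesis using qle vnn[of "{u}"] uN by auto
  next
    case False
    then have "m / dd \<le> m" using div_le_pos dd1 by simp
    then show ?thesis using qle mle by linarith
  qed
  have p'o: "\<And>w. w \<noteq> u \<Longrightarrow> p' w = stp s w" and p'u: "p' u = q" unfolding p'_def by auto
  have sumeq: "sum p' A = sum (stp s) A" if "u \<notin> A" for A
    using that by (intro sum.cong) (auto simp: p'_def)
  have p'le: "\<And>w. p' w \<le> stp s w" using qle unfolding p'_def by auto
  have p'b: "\<And>w. - Vmax \<le> p' w \<and> p' w \<le> B" using U(4) qge qB unfolding p'_def by auto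
  have TR1: "TRok \<sigma> (stTrace s @ [(u,q,a)])" by (simp add: TRok_append1 U(8) a_def)
  have PR1: "\<forall>e\<in>set (stTrace s @ [(u,q,a)]). p' (fst e) \<le> fst (snd e)"
    using U(9) p'le p'u by (auto intro: order_trans)
  have uX: "a \<Longrightarrow> u \<in> X \<Longrightarrow> c u \<le> q" using Xt unfolding a_def truthful_def by auto
  have curS: "\<And>i. i \<in> {1..l} \<Longrightarrow> u \<notin> stCur s i" and prevS: "\<And>i. i \<in> {1..l} \<Longrightarrow> u \<notin> stPrev s i"
    and uU: "u \<notin> stU s"
    using uS unfolding Sets_def by auto
  have xsS: "\<forall>w\<in>set xs. w \<noteq> u" using U(12) by auto
  have U7': "stU s = {} \<or> (\<exists>w. stU s = {w} \<and> p' w \<le> v {w})" using U(7) uU p'o by auto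
  have U11': "\<forall>w\<in>X. w \<in> Sets s \<longrightarrow> c w \<le> p' w"
  proof (intro ballI impI)
    fix w assume w: "w \<in> X" "w \<in> Sets s"
    then have "w \<noteq> u" using uS by auto
    then show "c w \<le> p' w" using U(11) p'o w by auto
  qed
  have RN: "stR s - {u} \<subseteq> N" using U(3) by auto
  show ?thesis
  proof (cases a)
    case False
    have Sets': "Sets (st1\<lparr>stR := stR s - {u}\<rparr>) = Sets s" unfolding Sets_def st1_def by simp
    have "INV \<rho> X \<sigma> (st1\<lparr>stR := stR s - {u}\<rparr>) xs"
      unfolding INV_def Sets'
      using U(1-14) \<open>\<not>stHalt s\<close> p'b TR1 PR1 False U7' U11' RN xsS
      apply (simp add: st1_def sumeq curS prevS)
      done
    then show ?thesis using eq False by simp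
  next
    case True
    note aT = True
    show ?thesis
    proof (cases "v (insert u (S j)) - sum p' (insert u (S j)) > \<rho>")
      case True
      have Sets': "Sets (st1\<lparr>stU := {u}, stHalt := True\<rparr>) = insert u (\<Union>i\<in>{1..l}. stCur s i \<union> stPrev s i)"
        unfolding Sets_def st1_def by simp
      have bnd1: "\<rho> < Vmax * (1 + real (card N))"
      proof -
        have "v (insert u (S j)) \<le> Vmax" using Vmax_ge SjN uN by simp
        moreover have "real (card (insert u (S j))) * (- Vmax) \<le> sum p' (insert u (S j))"
          by (rule sum_bounded_below) (use p'b in auto)
        moreover have "card (insert u (S j)) \<le> card N" using SjN uN finN by (intro card_mono) auto
        then have "real (card N) * (- Vmax) \<le> real (card (insert u (S j))) * (- Vmax)"
          using Vmax_nn by (intro mult_right_mono_neg) auto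
        ultimately show ?thesis using True by (simp add: algebra_simps)
      qed
      have bnd2: "\<rho> < 2 * OPT N v c B" if NX: "N \<subseteq> X"
      proof -
        have cu: "c u \<le> q" using uX[OF aT] NX uN by auto
        have SjSets: "S j \<subseteq> Sets s" using jl unfolding Sets_def S_def by auto
        have cw: "c w \<le> stp s w" if "w \<in> S j" for w
          using U(11) NX SjN SjSets that by auto
        have PSB: "sum (stp s) (S j) \<le> B"
          using U(5) jl budget_aux[OF be rho Bpos] unfolding S_def by blast
        have CS: "sum c (S j) \<le> sum (stp s) (S j)" using cw by (rule sum_mono)
        have o1: "v (S j) - sum c (S j) \<le> OPT N v c B" using OPT_ge[OF SjN] CS PSB by simp
        have o2: "v {u} - c u \<le> OPT N v c B" using OPT_ge[of "{u}"] uN cu qB by simp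
        have "sum p' (insert u (S j)) = q + sum (stp s) (S j)"
          using finSj uSj sumeq[OF uSj] p'u by simp
        moreover have "v (insert u (S j)) \<le> v (S j) + v {u}"
          using submod_single[OF SjN uN uSj] by simp
        ultimately show ?thesis using True o1 o2 CS cu by linarith
      qed
      have "INV \<rho> X \<sigma> (st1\<lparr>stU := {u}, stHalt := True\<rparr>) xs"
        unfolding INV_def Sets'
        using U(1-14) p'b TR1 PR1 aT bnd1 bnd2 uN qv p'u uX xsS
        apply (simp add: st1_def sumeq curS prevS)
        using U(10) uR U11' U(13) apply (auto simp: Sets_def)
        done
      then show ?thesis using eq aT True by simp
    next
      case False
      have Sets': "Sets (st1\<lparr>stCur := S(j := insert u (S j))\<rparr>) = insert u (Sets s)"
        
      proof -
        have "(\<Union>i\<in>{1..l}. (S(j := insert u (S j))) i \<union> stPrev s i) = insert u (\<Union>i\<in>{1..l}. S i \<union> stPrev s i)"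
        proof (rule set_eqI, rule iffI)
          fix x assume "x \<in> (\<Union>i\<in>{1..l}. (S(j := insert u (S j))) i \<union> stPrev s i)"
          then obtain i where i: "i \<in> {1..l}" "x \<in> (S(j := insert u (S j))) i \<union> stPrev s i" by blast
          show "x \<in> insert u (\<Union>i\<in>{1..l}. S i \<union> stPrev s i)"
          proof (cases "i = j")
            case True then show ?thesis using i by auto
          next
            case False then show ?thesis using i by auto
          qed
        next
          fix x assume x: "x \<in> insert u (\<Union>i\<in>{1..l}. S i \<union> stPrev s i)"
          show "x \<in> (\<Union>i\<in>{1..l}. (S(j := insert u (S j))) i \<union> stPrev s i)"
          proof (cases "x = u")
            case True then show ?thesis using jl by auto
          next
            case False
            then obtain i where i: "i \<in> {1..l}" "x \<in> S i \<union> stPrev s i" using x by blast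
            then have "x \<in> (S(j := insert u (S j))) i \<union> stPrev s i" by auto
            then show ?thesis using i by blast
          qed
        qed
        then show ?thesis unfolding Sets_def st1_def S_def by simp
      qed
      have sumCur: "\<forall>i\<in>{1..l}. sum p' (stCur s i) = sum (stp s) (stCur s i)"
        using sumeq curS by blast
      have sumPrev: "\<forall>i\<in>{1..l}. sum p' (stPrev s i) = sum (stp s) (stPrev s i)"
        using sumeq prevS by blast
      have sumj: "sum p' (insert u (S j)) = q + sum (stp s) (S j)"
        using finSj uSj sumeq[OF uSj] p'u by simp
      have vj: "v (insert u (S j)) = v (S j) + m" unfolding m_def marg_def by simp
      have ddq: "dd * q \<le> m" using qle dd1 by (simp add: le_divide_eq mult.commute)
      have U5j: "dd * sum (stp s) (S j) \<le> v (S j)" using U(5) jl unfolding dd_def S_def by blast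
      have addj: "(\<beta> + \<rho>/B) * sum p' (insert u (S j)) \<le> v (insert u (S j)) \<and>
          v (insert u (S j)) - sum p' (insert u (S j)) \<le> \<rho>"
      proof
        have "dd * sum p' (insert u (S j)) = dd * q + dd * sum (stp s) (S j)"
          using sumj by (simp add: algebra_simps)
        then show "(\<beta> + \<rho>/B) * sum p' (insert u (S j)) \<le> v (insert u (S j))"
          using ddq U5j vj unfolding dd_def by linarith
        show "v (insert u (S j)) - sum p' (insert u (S j)) \<le> \<rho>" using False by simp
      qed
      have SjuN: "insert u (S j) \<subseteq> N" using SjN uN by simp
      have "INV \<rho> X \<sigma> (st1\<lparr>stCur := S(j := insert u (S j))\<rparr>) xs"
        apply (rule INV_I)
        subgoal using U(1) SjuN by (auto simp: st1_def S_def)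
        subgoal using U(2) by (simp add: st1_def)
        subgoal using U(3) by (simp add: st1_def)
        subgoal using p'b by (simp add: st1_def)
        subgoal
        proof
          fix i assume i: "i \<in> {1..l}"
          show "(\<beta> + \<rho> / B) * sum (stp (st1\<lparr>stCur := S(j := insert u (S j))\<rparr>)) (stCur (st1\<lparr>stCur := S(j := insert u (S j))\<rparr>) i)
            \<le> v (stCur (st1\<lparr>stCur := S(j := insert u (S j))\<rparr>) i) \<and>
            v (stCur (st1\<lparr>stCur := S(j := insert u (S j))\<rparr>) i) -
            sum (stp (st1\<lparr>stCur := S(j := insert u (S j))\<rparr>)) (stCur (st1\<lparr>stCur := S(j := insert u (S j))\<rparr>) i) \<le> \<rho>"
          proof (cases "i = j")
            case True then show ?thesis using addj by (simp add: st1_def)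
          next
            case False then show ?thesis using U(5) sumCur i by (simp add: st1_def S_def)
          qed
        qed
        subgoal using U(6) sumPrev by (simp add: st1_def)
        subgoal using U7' by (simp add: st1_def)
        subgoal using TR1 by (simp add: st1_def)
        subgoal using PR1 by (simp add: st1_def)
        subgoal unfolding Sets' using U(10) uR aT by (auto simp: st1_def)
        subgoal unfolding Sets' using U11' uX aT p'u by (auto simp: st1_def)
        subgoal using U(12) by simp
        subgoal unfolding Sets' using U(13) xsS by (auto simp: st1_def)
        subgoal using \<open>\<not> stHalt s\<close> by (simp add: st1_def)
        done
      then show ?thesis using eq aT False by simp
    qed
  qed
qed

end


context bfm begin

lemma fold_INV:
  assumes "INV \<rho> X \<sigma> s xs" "0 < \<rho>" "\<forall>w\<in>X. \<sigma> w = truthful c w"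
  shows "INV \<rho> X \<sigma> (fold (\<lambda>u s. process_seller v B \<beta> l \<rho> \<sigma> s u) xs s) []"
  using assms(1)
proof (induction xs arbitrary: s)
  case Nil then show ?case by simp
next
  case (Cons u xs)
  have "INV \<rho> X \<sigma> (process_seller v B \<beta> l \<rho> \<sigma> s u) xs" by (rule step[OF Cons.prems assms(2,3)])
  then show ?case using Cons.IH by simp
qed

definition END :: "'a set \<Rightarrow> ('a \<Rightarrow> 'a strategy) \<Rightarrow> 'a mstate \<Rightarrow> bool" where
  "END X \<sigma> s \<longleftrightarrow>
    (\<forall>i. stCur s i \<subseteq> N \<and> stPrev s i \<subseteq> N) \<and> stU s \<subseteq> N \<and> stR s \<subseteq> N \<and>
    (\<forall>w. - Vmax \<le> stp s w \<and> stp s w \<le> B) \<and>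
    (\<forall>i\<in>{1..l}. sum (stp s) (stCur s i) \<le> B \<and> sum (stp s) (stPrev s i) \<le> B) \<and>
    (stU s = {} \<or> (\<exists>w. stU s = {w} \<and> stp s w \<le> v {w})) \<and>
    TRok \<sigma> (stTrace s) \<and>
    (\<forall>e\<in>set (stTrace s). stp s (fst e) \<le> fst (snd e)) \<and>
    (\<forall>w q. (w, q, False) \<in> set (stTrace s) \<longrightarrow> w \<notin> stR s \<and> w \<notin> Sets s) \<and>
    (\<forall>w\<in>X. w \<in> Sets s \<longrightarrow> c w \<le> stp s w)"

lemma INV_END:
  assumes I: "INV \<rho> X \<sigma> s []" and rho: "0 < \<rho>"
  shows "END X \<sigma> s"
proof -
  note U = INV_unpack[OF I]
  have "\<forall>i\<in>{1..l}. sum (stp s) (stCur s i) \<le> B"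
    using U(5) budget_aux[OF be rho Bpos] by blast
  then show ?thesis using U unfolding END_def by blast
qed

definition rho :: "nat \<Rightarrow> real" where "rho t = \<epsilon> / \<alpha> * \<alpha> ^ t"

lemma rho_pos: "0 < rho t"
  unfolding rho_def using eps al by simp

lemma round_INV:
  assumes E: "END X \<sigma> st" and Xt: "\<forall>w\<in>X. \<sigma> w = truthful c w"
  shows "INV (rho t) X \<sigma> (run_round v ord B \<alpha> \<beta> \<epsilon> l \<sigma> t st) []"
proof -
  define todo where "todo = filter (\<lambda>u. u \<in> stR st \<and> u \<notin> (\<Union>i\<in>{1..l}. stCur st i) \<and> u \<notin> stU st) ord"
  define st0 where "st0 = st\<lparr> stPrev := stCur st, stCur := (\<lambda>_. {}), stHalt := False \<rparr>"
  have rr: "run_round v ord B \<alpha> \<beta> \<epsilon> l \<sigma> t st = fold (\<lambda>u s. process_seller v B \<beta> l (rho t) \<sigma> s u) todo st0"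
    unfolding run_round_def todo_def st0_def rho_def Let_def by simp
  have Sets0: "Sets st0 = stU st \<union> (\<Union>i\<in>{1..l}. stCur st i)" unfolding Sets_def st0_def by simp
  have SetsSub: "Sets st0 \<subseteq> Sets st" apply (subst Sets0) unfolding Sets_def by auto
  have "INV (rho t) X \<sigma> st0 todo"
    apply (rule INV_I)
    subgoal using E unfolding END_def st0_def by simp
    subgoal using E unfolding END_def st0_def by simp
    subgoal using E unfolding END_def st0_def by simp
    subgoal using E unfolding END_def st0_def by simp
    subgoal using v0 rho_pos[of t] unfolding st0_def by simp
    subgoal using E unfolding END_def st0_def by simp
    subgoal using E unfolding END_def st0_def by simp
    subgoal using E unfolding END_def st0_def by simp
    subgoal using E unfolding END_def st0_def by simp
    subgoal using E SetsSub unfolding END_def by (auto simp: st0_def)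
    subgoal using E SetsSub unfolding END_def by (auto simp: st0_def)
    subgoal using dist unfolding todo_def by simp
    subgoal unfolding Sets0 todo_def by (auto simp: st0_def)
    subgoal unfolding st0_def by simp
    done
  from fold_INV[OF this rho_pos Xt] show ?thesis unfolding rr .
qed

definition INI :: "('a \<Rightarrow> 'a strategy) \<Rightarrow> 'a mstate \<Rightarrow> 'a list \<Rightarrow> bool" where
  "INI \<sigma> s xs \<longleftrightarrow> stU s = {} \<and> (\<forall>i. stCur s i = {} \<and> stPrev s i = {}) \<and> stp s = (\<lambda>_. B) \<and>
     stR s \<subseteq> N \<and> TRok \<sigma> (stTrace s) \<and> (\<forall>e\<in>set (stTrace s). fst (snd e) = B) \<and>
     (\<forall>w q. (w, q, False) \<in> set (stTrace s) \<longrightarrow> w \<notin> stR s) \<and>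
     distinct xs \<and> set xs \<subseteq> N \<and> (\<forall>w\<in>set xs. w \<notin> stR s \<and> (\<forall>e\<in>set (stTrace s). fst e \<noteq> w))"

lemma INI_step:
  assumes "INI \<sigma> s (u # xs)"
  shows "INI \<sigma> (offer_B B \<sigma> s u) xs"
  using assms unfolding INI_def offer_B_def Let_def
  by (auto simp: TRok_append1)

lemma INI_fold: "INI \<sigma> s xs \<Longrightarrow> INI \<sigma> (fold (\<lambda>u st. offer_B B \<sigma> st u) xs s) []"
proof (induction xs arbitrary: s)
  case Nil then show ?case by simp
next
  case (Cons u xs) then show ?case using INI_step by simp
qed

lemma init_END: "END X \<sigma> (init_state ord B \<sigma>)"
proof -
  have "INI \<sigma> \<lparr> stR = {}, stp = (\<lambda>_. B), stU = {}, stPrev = (\<lambda>_. {}), stCur = (\<lambda>_. {}),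
         stTrace = [], stSteps = 0, stHalt = False \<rparr> ord"
    unfolding INI_def using dist setord by (simp add: TRok_def)
  from INI_fold[OF this] have I: "INI \<sigma> (init_state ord B \<sigma>) []" unfolding init_state_def .
  have S: "Sets (init_state ord B \<sigma>) = {}" using I unfolding INI_def Sets_def by simp
  show ?thesis using I Vmax_nn Bpos unfolding END_def INI_def S by auto
qed

lemma rounds_END:
  assumes Xt: "\<forall>w\<in>X. \<sigma> w = truthful c w"
  shows "END X \<sigma> (rounds v ord B \<alpha> \<beta> \<epsilon> l \<sigma> t)"
proof (induction t)
  case 0 then show ?case using init_END by simp
next
  case (Suc t)
  then show ?case using INV_END[OF round_INV[OF Suc Xt] rho_pos] by simp
qed

lemma rounds_INV:
  assumes Xt: "\<forall>w\<in>X. \<sigma> w = truthful c w"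
  shows "INV (rho (Suc t)) X \<sigma> (rounds v ord B \<alpha> \<beta> \<epsilon> l \<sigma> (Suc t)) []"
  using round_INV[OF rounds_END[OF Xt] Xt] by simp

end


definition pj :: "('a set \<Rightarrow> real) \<Rightarrow> nat \<Rightarrow> 'a mstate \<Rightarrow> 'a \<Rightarrow> nat" where
  "pj v l s u = (LEAST i. 1 \<le> i \<and> i \<le> l \<and> (\<forall>k. 1 \<le> k \<and> k \<le> l \<longrightarrow> marg v (stCur s k) u \<le> marg v (stCur s i) u))"

definition pq :: "('a set \<Rightarrow> real) \<Rightarrow> real \<Rightarrow> real \<Rightarrow> nat \<Rightarrow> real \<Rightarrow> 'a mstate \<Rightarrow> 'a \<Rightarrow> real" where
  "pq v B \<beta> l \<rho> s u = min (stp s u) (marg v (stCur s (pj v l s u)) u / (\<beta> + \<rho> / B))"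

lemma process_cases:
  assumes "\<not> stHalt s"
  shows "process_seller v B \<beta> l \<rho> \<sigma> s u =
    (let j = pj v l s u; q = pq v B \<beta> l \<rho> s u; a = \<sigma> u (stTrace s) q;
         st1 = s\<lparr>stp := (stp s)(u := q), stTrace := stTrace s @ [(u, q, a)], stSteps := stSteps s + 2 * l + 2\<rparr>
     in if a then (if v (insert u (stCur s j)) - sum ((stp s)(u := q)) (insert u (stCur s j)) > \<rho>
                   then st1\<lparr>stU := {u}, stHalt := True\<rparr>
                   else st1\<lparr>stCur := (stCur s)(j := insert u (stCur s j))\<rparr>)
        else st1\<lparr>stR := stR s - {u}\<rparr>)"
  using assms unfolding process_seller_def pj_def pq_def Let_def by simp

lemma process_halted: "stHalt s \<Longrightarrow> process_seller v B \<beta> l \<rho> \<sigma> s u = s"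
  unfolding process_seller_def by simp

lemma process_trace:
  "\<not> stHalt s \<Longrightarrow> stTrace (process_seller v B \<beta> l \<rho> \<sigma> s u) =
     stTrace s @ [(u, pq v B \<beta> l \<rho> s u, \<sigma> u (stTrace s) (pq v B \<beta> l \<rho> s u))]"
  by (simp add: process_cases Let_def)

lemma process_prefix: "prefix (stTrace s) (stTrace (process_seller v B \<beta> l \<rho> \<sigma> s u))"
  by (cases "stHalt s") (simp_all add: process_halted process_trace)

lemma process_steps: "stSteps (process_seller v B \<beta> l \<rho> \<sigma> s u) \<le> stSteps s + (2 * l + 2)"
  by (cases "stHalt s") (simp_all add: process_halted process_cases Let_def)

lemma process_agree:
  assumes "stHalt s \<or> \<sigma>' u (stTrace s) (pq v B \<beta> l \<rho> s u) = \<sigma> u (stTrace s) (pq v B \<beta> l \<rho> s u)"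
  shows "process_seller v B \<beta> l \<rho> \<sigma>' s u = process_seller v B \<beta> l \<rho> \<sigma> s u"
  using assms by (cases "stHalt s") (simp_all add: process_halted process_cases Let_def)

lemma process_nohalt:
  assumes nh: "\<not> stHalt (process_seller v B \<beta> l \<rho> \<sigma> s u)" and jl: "pj v l s u \<in> {1..l}"
  shows "\<not> stHalt s \<and> (u \<notin> stR (process_seller v B \<beta> l \<rho> \<sigma> s u) \<or>
            u \<in> (\<Union>i\<in>{1..l}. stCur (process_seller v B \<beta> l \<rho> \<sigma> s u) i)) \<and>
         stR (process_seller v B \<beta> l \<rho> \<sigma> s u) \<subseteq> stR s \<and>
         (\<forall>i. stCur s i \<subseteq> stCur (process_seller v B \<beta> l \<rho> \<sigma> s u) i) \<and>
         stU (process_seller v B \<beta> l \<rho> \<sigma> s u) = stU s \<and>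
         stPrev (process_seller v B \<beta> l \<rho> \<sigma> s u) = stPrev s"
proof -
  have h: "\<not> stHalt s" using nh process_halted by metis
  show ?thesis
  proof (cases "\<sigma> u (stTrace s) (pq v B \<beta> l \<rho> s u)")
    case False then show ?thesis using h by (simp add: process_cases Let_def)
  next
    case True
    show ?thesis
    proof (cases "v (insert u (stCur s (pj v l s u))) - sum ((stp s)(u := pq v B \<beta> l \<rho> s u)) (insert u (stCur s (pj v l s u))) > \<rho>")
      case True2: True
      then show ?thesis using h True nh by (simp add: process_cases Let_def)
    next
      case False
      have "stCur (process_seller v B \<beta> l \<rho> \<sigma> s u) = (stCur s)(pj v l s u := insert u (stCur s (pj v l s u)))"
        using h True False by (simp add: process_cases Let_def)
      moreover have "stR (process_seller v B \<beta> l \<rho> \<sigma> s u) = stR s"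
        "stU (process_seller v B \<beta> l \<rho> \<sigma> s u) = stU s"
        "stPrev (process_seller v B \<beta> l \<rho> \<sigma> s u) = stPrev s"
        using h True False by (simp_all add: process_cases Let_def)
      ultimately show ?thesis using h jl by force
    qed
  qed
qed


lemma fold_prefix: "prefix (stTrace s) (stTrace (fold (\<lambda>u s. process_seller v B \<beta> l \<rho> \<sigma> s u) xs s))"
proof (induction xs arbitrary: s)
  case Nil then show ?case by simp
next
  case (Cons x xs)
  then show ?case using process_prefix[of s v B \<beta> l \<rho> \<sigma> x] prefix_order.trans by fastforce
qed

lemma fold_agree:
  "TRok \<sigma>' (stTrace (fold (\<lambda>u s. process_seller v B \<beta> l \<rho> \<sigma> s u) xs s)) \<Longrightarrow>
   fold (\<lambda>u s. process_seller v B \<beta> l \<rho> \<sigma>' s u) xs s = fold (\<lambda>u s. process_seller v B \<beta> l \<rho> \<sigma> s u) xs s"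
proof (induction xs arbitrary: s)
  case Nil then show ?case by simp
next
  case (Cons x xs)
  let ?s1 = "process_seller v B \<beta> l \<rho> \<sigma> s x"
  have t: "TRok \<sigma>' (stTrace (fold (\<lambda>u s. process_seller v B \<beta> l \<rho> \<sigma> s u) xs ?s1))" using Cons.prems by simp
  have t1: "TRok \<sigma>' (stTrace ?s1)" by (rule TRok_prefix[OF fold_prefix t])
  have "process_seller v B \<beta> l \<rho> \<sigma>' s x = ?s1"
  proof (rule process_agree)
    show "stHalt s \<or> \<sigma>' x (stTrace s) (pq v B \<beta> l \<rho> s x) = \<sigma> x (stTrace s) (pq v B \<beta> l \<rho> s x)"
    proof (cases "stHalt s")
      case False
      then show ?thesis using t1 by (simp add: process_trace TRok_append1)
    qed simp
  qed
  then show ?case using Cons.IH[OF t] by simp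
qed

lemma offer_prefix: "prefix (stTrace s) (stTrace (fold (\<lambda>u st. offer_B B \<sigma> st u) xs s))"
proof (induction xs arbitrary: s)
  case Nil then show ?case by simp
next
  case (Cons x xs)
  have "prefix (stTrace s) (stTrace (offer_B B \<sigma> s x))" by (simp add: offer_B_def Let_def)
  then show ?case using Cons prefix_order.trans by fastforce
qed

lemma offer_agree:
  "TRok \<sigma>' (stTrace (fold (\<lambda>u st. offer_B B \<sigma> st u) xs s)) \<Longrightarrow>
   fold (\<lambda>u st. offer_B B \<sigma>' st u) xs s = fold (\<lambda>u st. offer_B B \<sigma> st u) xs s"
proof (induction xs arbitrary: s)
  case Nil then show ?case by simp
next
  case (Cons x xs)
  let ?s1 = "offer_B B \<sigma> s x"
  have t: "TRok \<sigma>' (stTrace (fold (\<lambda>u st. offer_B B \<sigma> st u) xs ?s1))" using Cons.prems by simp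
  have t1: "TRok \<sigma>' (stTrace ?s1)" by (rule TRok_prefix[OF offer_prefix t])
  then have "\<sigma>' x (stTrace s) B = \<sigma> x (stTrace s) B" by (simp add: offer_B_def Let_def TRok_append1)
  then have "offer_B B \<sigma>' s x = ?s1" by (simp add: offer_B_def Let_def)
  then show ?case using Cons.IH[OF t] by simp
qed

lemma round_prefix: "prefix (stTrace st) (stTrace (run_round v ord B \<alpha> \<beta> \<epsilon> l \<sigma> t st))"
proof -
  let ?st0 = "st\<lparr>stPrev := stCur st, stCur := (\<lambda>_. {}), stHalt := False\<rparr>"
  have "prefix (stTrace ?st0) (stTrace (fold (\<lambda>u s. process_seller v B \<beta> l (\<epsilon> / \<alpha> * \<alpha> ^ t) \<sigma> s u)
          (filter (\<lambda>u. u \<in> stR st \<and> u \<notin> (\<Union>i\<in>{1..l}. stCur st i) \<and> u \<notin> stU st) ord) ?st0))"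
    by (rule fold_prefix)
  then show ?thesis by (simp add: run_round_def Let_def)
qed

lemma round_agree:
  "TRok \<sigma>' (stTrace (run_round v ord B \<alpha> \<beta> \<epsilon> l \<sigma> t st)) \<Longrightarrow>
   run_round v ord B \<alpha> \<beta> \<epsilon> l \<sigma>' t st = run_round v ord B \<alpha> \<beta> \<epsilon> l \<sigma> t st"
  unfolding run_round_def Let_def by (rule fold_agree)

lemma rounds_prefix: "t \<le> T \<Longrightarrow> prefix (stTrace (rounds v ord B \<alpha> \<beta> \<epsilon> l \<sigma> t)) (stTrace (rounds v ord B \<alpha> \<beta> \<epsilon> l \<sigma> T))"
proof (induction T)
  case 0 then show ?case by simp
next
  case (Suc T)
  show ?case
  proof (cases "t = Suc T")
    case True then show ?thesis by simp
  next
    case False then have "t \<le> T" using Suc.prems by simp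
    then show ?thesis using Suc.IH round_prefix prefix_order.trans by (simp, blast)
  qed
qed

lemma rounds_agree:
  assumes "TRok \<sigma>' (stTrace (rounds v ord B \<alpha> \<beta> \<epsilon> l \<sigma> T))"
  shows "t \<le> T \<Longrightarrow> rounds v ord B \<alpha> \<beta> \<epsilon> l \<sigma>' t = rounds v ord B \<alpha> \<beta> \<epsilon> l \<sigma> t"
proof (induction t)
  case 0
  have "TRok \<sigma>' (stTrace (rounds v ord B \<alpha> \<beta> \<epsilon> l \<sigma> 0))"
    using TRok_prefix[OF rounds_prefix[OF 0] assms] .
  then show ?case by (simp add: init_state_def offer_agree)
next
  case (Suc t)
  have "TRok \<sigma>' (stTrace (rounds v ord B \<alpha> \<beta> \<epsilon> l \<sigma> (Suc t)))"
    using TRok_prefix[OF rounds_prefix[OF Suc.prems] assms] .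
  then have "run_round v ord B \<alpha> \<beta> \<epsilon> l \<sigma>' (Suc t) (rounds v ord B \<alpha> \<beta> \<epsilon> l \<sigma> t) =
             run_round v ord B \<alpha> \<beta> \<epsilon> l \<sigma> (Suc t) (rounds v ord B \<alpha> \<beta> \<epsilon> l \<sigma> t)"
    by (simp add: round_agree)
  then show ?case using Suc by simp
qed

lemma fold_steps: "stSteps (fold (\<lambda>u s. process_seller v B \<beta> l \<rho> \<sigma> s u) xs s) \<le> stSteps s + (2 * l + 2) * length xs"
proof (induction xs arbitrary: s)
  case Nil then show ?case by simp
next
  case (Cons x xs)
  let ?s1 = "process_seller v B \<beta> l \<rho> \<sigma> s x"
  have a: "stSteps (fold (\<lambda>u s. process_seller v B \<beta> l \<rho> \<sigma> s u) xs ?s1) \<le> stSteps ?s1 + (2 * l + 2) * length xs"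
    by (rule Cons.IH)
  have b: "stSteps ?s1 \<le> stSteps s + (2 * l + 2)" by (rule process_steps)
  have "(2 * l + 2) * length (x # xs) = (2 * l + 2) + (2 * l + 2) * length xs" by simp
  then show ?case using a b by simp
qed

lemma offer_steps: "stSteps (fold (\<lambda>u st. offer_B B \<sigma> st u) xs s) = stSteps s + length xs"
  by (induction xs arbitrary: s) (simp_all add: offer_B_def Let_def)

lemma round_steps: "stSteps (run_round v ord B \<alpha> \<beta> \<epsilon> l \<sigma> t st) \<le> stSteps st + (2 * l + 2) * length ord"
proof -
  have "stSteps (run_round v ord B \<alpha> \<beta> \<epsilon> l \<sigma> t st) \<le> stSteps st + (2 * l + 2) * length (filter (\<lambda>u. u \<in> stR st \<and> u \<notin> (\<Union>i\<in>{1..l}. stCur st i) \<and> u \<notin> stU st) ord)"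
  proof -
    let ?st0 = "st\<lparr>stPrev := stCur st, stCur := (\<lambda>_. {}), stHalt := False\<rparr>"
    have "stSteps (fold (\<lambda>u s. process_seller v B \<beta> l (\<epsilon> / \<alpha> * \<alpha> ^ t) \<sigma> s u)
          (filter (\<lambda>u. u \<in> stR st \<and> u \<notin> (\<Union>i\<in>{1..l}. stCur st i) \<and> u \<notin> stU st) ord) ?st0)
       \<le> stSteps ?st0 + (2 * l + 2) * length (filter (\<lambda>u. u \<in> stR st \<and> u \<notin> (\<Union>i\<in>{1..l}. stCur st i) \<and> u \<notin> stU st) ord)"
      by (rule fold_steps)
    then show ?thesis by (simp add: run_round_def Let_def)
  qed
  also have "\<dots> \<le> stSteps st + (2 * l + 2) * length ord" by (intro add_left_mono mult_le_mono2 length_filter_le)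
  finally show ?thesis .
qed

lemma rounds_steps: "stSteps (rounds v ord B \<alpha> \<beta> \<epsilon> l \<sigma> t) \<le> length ord + t * ((2 * l + 2) * length ord)"
proof (induction t)
  case 0 then show ?case by (simp add: init_state_def offer_steps)
next
  case (Suc t) then show ?case using round_steps[of v ord B \<alpha> \<beta> \<epsilon> l \<sigma> "Suc t" "rounds v ord B \<alpha> \<beta> \<epsilon> l \<sigma> t"] by simp
qed

context bfm begin

lemma fold_nohalt:
  "\<not> stHalt (fold (\<lambda>u s. process_seller v B \<beta> l \<rho> \<sigma> s u) xs s) \<Longrightarrow>
    \<not> stHalt s \<and>
    (\<forall>u\<in>set xs. u \<notin> stR (fold (\<lambda>u s. process_seller v B \<beta> l \<rho> \<sigma> s u) xs s) \<or>
         u \<in> (\<Union>i\<in>{1..l}. stCur (fold (\<lambda>u s. process_seller v B \<beta> l \<rho> \<sigma> s u) xs s) i)) \<and>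
    stR (fold (\<lambda>u s. process_seller v B \<beta> l \<rho> \<sigma> s u) xs s) \<subseteq> stR s \<and>
    (\<forall>i. stCur s i \<subseteq> stCur (fold (\<lambda>u s. process_seller v B \<beta> l \<rho> \<sigma> s u) xs s) i) \<and>
    stU (fold (\<lambda>u s. process_seller v B \<beta> l \<rho> \<sigma> s u) xs s) = stU s \<and>
    stPrev (fold (\<lambda>u s. process_seller v B \<beta> l \<rho> \<sigma> s u) xs s) = stPrev s"
proof (induction xs arbitrary: s)
  case Nil then show ?case by simp
next
  case (Cons x xs)
  let ?s1 = "process_seller v B \<beta> l \<rho> \<sigma> s x"
  let ?F = "fold (\<lambda>u s. process_seller v B \<beta> l \<rho> \<sigma> s u) xs ?s1"
  have IH: "\<not> stHalt ?s1 \<and>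
    (\<forall>u\<in>set xs. u \<notin> stR ?F \<or> u \<in> (\<Union>i\<in>{1..l}. stCur ?F i)) \<and>
    stR ?F \<subseteq> stR ?s1 \<and> (\<forall>i. stCur ?s1 i \<subseteq> stCur ?F i) \<and> stU ?F = stU ?s1 \<and> stPrev ?F = stPrev ?s1"
    using Cons by simp
  have jl: "pj v l s x \<in> {1..l}" unfolding pj_def using least_j[where f="\<lambda>i. marg v (stCur s i) x", OF l1 l2] by simp
  have P: "\<not> stHalt s \<and> (x \<notin> stR ?s1 \<or> x \<in> (\<Union>i\<in>{1..l}. stCur ?s1 i)) \<and> stR ?s1 \<subseteq> stR s \<and>
         (\<forall>i. stCur s i \<subseteq> stCur ?s1 i) \<and> stU ?s1 = stU s \<and> stPrev ?s1 = stPrev s"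
    using process_nohalt[OF _ jl] IH by blast
  have IH1: "stR ?F \<subseteq> stR ?s1" using IH by (elim conjE) assumption
  have IH2: "\<forall>i. stCur ?s1 i \<subseteq> stCur ?F i" using IH by (elim conjE) assumption
  have IH3: "stU ?F = stU ?s1" using IH by (elim conjE) assumption
  have IH4: "stPrev ?F = stPrev ?s1" using IH by (elim conjE) assumption
  have IH5: "\<forall>u\<in>set xs. u \<notin> stR ?F \<or> u \<in> (\<Union>i\<in>{1..l}. stCur ?F i)" using IH by (elim conjE) assumption
  have P1: "stR ?s1 \<subseteq> stR s" using P by (elim conjE) assumption
  have P2: "\<forall>i. stCur s i \<subseteq> stCur ?s1 i" using P by (elim conjE) assumption
  have P3: "stU ?s1 = stU s" using P by (elim conjE) assumption
  have P4: "stPrev ?s1 = stPrev s" using P by (elim conjE) assumption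
  have P0: "\<not> stHalt s" using P by (elim conjE) assumption
  have P5: "x \<notin> stR ?s1 \<or> x \<in> (\<Union>i\<in>{1..l}. stCur ?s1 i)" using P by (elim conjE) assumption
  have x1: "x \<notin> stR ?F \<or> x \<in> (\<Union>i\<in>{1..l}. stCur ?F i)"
  proof (cases "x \<in> stR ?s1")
    case False
    then have "x \<notin> stR ?F" using IH1 by blast
    then show ?thesis by blast
  next
    case True
    then obtain i where "i \<in> {1..l}" "x \<in> stCur ?s1 i" using P5 by blast
    moreover have "stCur ?s1 i \<subseteq> stCur ?F i" using IH2 by blast
    ultimately show ?thesis by blast
  qed
  have e: "fold (\<lambda>u s. process_seller v B \<beta> l \<rho> \<sigma> s u) (x # xs) s = ?F" by simp
  show ?case unfolding e
  proof (intro conjI)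
    show "\<not> stHalt s" by (rule P0)
    show "\<forall>u\<in>set (x # xs). u \<notin> stR ?F \<or> u \<in> (\<Union>i\<in>{1..l}. stCur ?F i)" using x1 IH5 by simp
    show "stR ?F \<subseteq> stR s" using P1 IH1 by (rule order_trans[rotated])
    show "\<forall>i. stCur s i \<subseteq> stCur ?F i" using P2 IH2 by (meson order_trans)
    show "stU ?F = stU s" using P3 IH3 by simp
    show "stPrev ?F = stPrev s" using P4 IH4 by simp
  qed
qed

lemma round_nohalt_stop:
  assumes nh: "\<not> stHalt (run_round v ord B \<alpha> \<beta> \<epsilon> l \<sigma> t st)" and RN: "stR st \<subseteq> N"
  shows "stop_cond l (run_round v ord B \<alpha> \<beta> \<epsilon> l \<sigma> t st)"
proof -
  define todo where "todo = filter (\<lambda>u. u \<in> stR st \<and> u \<notin> (\<Union>i\<in>{1..l}. stCur st i) \<and> u \<notin> stU st) ord"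
  define st0 where "st0 = st\<lparr> stPrev := stCur st, stCur := (\<lambda>_. {}), stHalt := False \<rparr>"
  define \<rho> where "\<rho> = \<epsilon> / \<alpha> * \<alpha> ^ t"
  have rr: "run_round v ord B \<alpha> \<beta> \<epsilon> l \<sigma> t st = fold (\<lambda>u s. process_seller v B \<beta> l \<rho> \<sigma> s u) todo st0"
    unfolding run_round_def todo_def st0_def \<rho>_def Let_def by simp
  let ?F = "fold (\<lambda>u s. process_seller v B \<beta> l \<rho> \<sigma> s u) todo st0"
  have F: "(\<forall>u\<in>set todo. u \<notin> stR ?F \<or> u \<in> (\<Union>i\<in>{1..l}. stCur ?F i)) \<and>
    stR ?F \<subseteq> stR st0 \<and> stU ?F = stU st0 \<and> stPrev ?F = stPrev st0"
    using fold_nohalt[of \<rho> \<sigma> todo st0] nh rr by simp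
  show ?thesis unfolding stop_cond_def rr
  proof (rule ccontr)
    assume "stR ?F - ((\<Union>i\<in>{1..l}. stPrev ?F i \<union> stCur ?F i) \<union> stU ?F) \<noteq> {}"
    then obtain w where w: "w \<in> stR ?F" "w \<notin> (\<Union>i\<in>{1..l}. stPrev ?F i \<union> stCur ?F i)" "w \<notin> stU ?F" by blast
    have "w \<in> stR st" using w(1) F unfolding st0_def by auto
    moreover have "w \<notin> (\<Union>i\<in>{1..l}. stCur st i)" using w(2) F unfolding st0_def by auto
    moreover have "w \<notin> stU st" using w(3) F unfolding st0_def by auto
    moreover have "w \<in> set ord" using calculation(1) RN setord by auto
    ultimately have "w \<in> set todo" unfolding todo_def by simp
    then show False using F w by blast
  qed
qed

end


context bfm begin

abbreviation R :: "('a \<Rightarrow> 'a strategy) \<Rightarrow> nat \<Rightarrow> 'a mstate" where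
  "R \<sigma> t \<equiv> rounds v ord B \<alpha> \<beta> \<epsilon> l \<sigma> t"

lemma nostop_halt:
  assumes "\<not> stop_cond l (R \<sigma> (Suc t))"
  shows "stHalt (R \<sigma> (Suc t))"
proof (rule ccontr)
  assume nh: "\<not> stHalt (R \<sigma> (Suc t))"
  have RN: "stR (R \<sigma> t) \<subseteq> N" using rounds_END[of "{}" \<sigma> t] unfolding END_def by auto
  have "stop_cond l (run_round v ord B \<alpha> \<beta> \<epsilon> l \<sigma> (Suc t) (R \<sigma> t))"
    by (rule round_nohalt_stop) (use nh RN in simp_all)
  then show False using assms by simp
qed

lemma terminates: "\<exists>t\<ge>1. stop_cond l (R \<sigma> t)"
proof -
  obtain n where n: "Vmax * (1 + real (card N)) / \<epsilon> < \<alpha> ^ n" using real_arch_pow[OF al] by blast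
  then have "Vmax * (1 + real (card N)) < \<epsilon> * \<alpha> ^ n" using eps by (simp add: pos_divide_less_eq mult.commute)
  moreover have "rho (Suc n) = \<epsilon> * \<alpha> ^ n" unfolding rho_def using al by simp
  ultimately have big: "Vmax * (1 + real (card N)) < rho (Suc n)" by simp
  have I: "INV (rho (Suc n)) {} \<sigma> (R \<sigma> (Suc n)) []" using rounds_INV[of "{}" \<sigma> n] by simp
  have "\<not> stHalt (R \<sigma> (Suc n))" using INV_unpack(14)[OF I] big by linarith
  then have "stop_cond l (R \<sigma> (Suc n))" using nostop_halt by blast
  then show ?thesis by (intro exI[of _ "Suc n"]) simp
qed

abbreviation M :: "('a \<Rightarrow> 'a strategy) \<Rightarrow> nat" where
  "M \<sigma> \<equiv> num_rounds v ord B \<alpha> \<beta> \<epsilon> l \<sigma>"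

lemma M_props: "1 \<le> M \<sigma>" "stop_cond l (R \<sigma> (M \<sigma>))" "\<And>t. 1 \<le> t \<Longrightarrow> t < M \<sigma> \<Longrightarrow> \<not> stop_cond l (R \<sigma> t)"
proof -
  have ex: "\<exists>t. 1 \<le> t \<and> stop_cond l (R \<sigma> t)" using terminates by blast
  have "1 \<le> M \<sigma> \<and> stop_cond l (R \<sigma> (M \<sigma>))"
    unfolding num_rounds_def by (rule LeastI_ex[OF ex])
  then show "1 \<le> M \<sigma>" "stop_cond l (R \<sigma> (M \<sigma>))" by auto
  fix t assume "1 \<le> t" "t < M \<sigma>"
  then show "\<not> stop_cond l (R \<sigma> t)"
    using not_less_Least[of t "\<lambda>t. 1 \<le> t \<and> stop_cond l (R \<sigma> t)"] unfolding num_rounds_def by auto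
qed

abbreviation FS :: "('a \<Rightarrow> 'a strategy) \<Rightarrow> 'a mstate" where
  "FS \<sigma> \<equiv> final_state v ord B \<alpha> \<beta> \<epsilon> l \<sigma>"

lemma FS_END: "\<forall>w\<in>X. \<sigma> w = truthful c w \<Longrightarrow> END X \<sigma> (FS \<sigma>)"
  unfolding final_state_def by (rule rounds_END)

lemma set_candidates: "set (candidates l st) = stPrev st ` {1..l} \<union> stCur st ` {1..l} \<union> {stU st}"
proof -
  have "{1..<l+1} = {1..l}" by auto
  then show ?thesis unfolding candidates_def by auto
qed

lemma winners_props:
  fixes \<sigma> :: "'a \<Rightarrow> 'a strategy"
  defines "W \<equiv> winners v ord B \<alpha> \<beta> \<epsilon> l \<sigma>"
  shows "W \<subseteq> Sets (FS \<sigma>)" "sum (payment v ord B \<alpha> \<beta> \<epsilon> l \<sigma>) W \<le> B"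
    "0 \<le> v W - sum (payment v ord B \<alpha> \<beta> \<epsilon> l \<sigma>) W"
proof -
  let ?st = "FS \<sigma>"
  let ?f = "\<lambda>A. v A - sum (stp ?st) A"
  have E: "END {} \<sigma> ?st" using FS_END by simp
  have ne: "candidates l ?st \<noteq> []" unfolding candidates_def by simp
  have Wd: "W = first_argmax ?f (candidates l ?st)" unfolding W_def winners_def Let_def by simp
  note fa = first_argmax_mem[OF ne, of ?f]
  have Win: "W \<in> set (candidates l ?st)" using fa Wd by simp
  have Wmax: "?f (stU ?st) \<le> ?f W" using fa Wd unfolding set_candidates by simp
  have pay: "payment v ord B \<alpha> \<beta> \<epsilon> l \<sigma> = stp ?st" unfolding payment_def ..
  show "W \<subseteq> Sets (FS \<sigma>)" using Win unfolding set_candidates Sets_def by auto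
  have U: "stU ?st = {} \<or> (\<exists>w. stU ?st = {w} \<and> stp ?st w \<le> v {w})" and
    Bd: "\<forall>i\<in>{1..l}. sum (stp ?st) (stCur ?st i) \<le> B \<and> sum (stp ?st) (stPrev ?st i) \<le> B" and
    pB: "\<forall>w. - Vmax \<le> stp ?st w \<and> stp ?st w \<le> B"
    using E unfolding END_def by blast+
  have "sum (stp ?st) (stU ?st) \<le> B" using U pB Bpos by auto
  then show "sum (payment v ord B \<alpha> \<beta> \<epsilon> l \<sigma>) W \<le> B"
    using Win Bd unfolding set_candidates pay by auto
  have "0 \<le> ?f (stU ?st)" using U v0 by auto
  then show "0 \<le> v W - sum (payment v ord B \<alpha> \<beta> \<epsilon> l \<sigma>) W" using Wmax pay by simp
qed

lemma IR:
  assumes uN: "u \<in> N"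
  shows "0 \<le> seller_util v ord B \<alpha> \<beta> \<epsilon> l c (\<sigma>(u := truthful c u)) u"
proof -
  let ?s = "\<sigma>(u := truthful c u)"
  have E: "END {u} ?s (FS ?s)" using FS_END by simp
  show ?thesis
  proof (cases "u \<in> winners v ord B \<alpha> \<beta> \<epsilon> l ?s")
    case True
    then have "u \<in> Sets (FS ?s)" using winners_props(1) by blast
    then have "c u \<le> stp (FS ?s) u" using E unfolding END_def by blast
    then show ?thesis using True unfolding seller_util_def payment_def by simp
  qed (simp add: seller_util_def)
qed

lemma util_le0:
  assumes uN: "u \<in> N" and ev: "(u, q, b) \<in> set (mech_trace v ord B \<alpha> \<beta> \<epsilon> l \<sigma>)" and bne: "b \<noteq> (c u \<le> q)"
  shows "seller_util v ord B \<alpha> \<beta> \<epsilon> l c \<sigma> u \<le> 0"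
proof -
  have E: "END {} \<sigma> (FS \<sigma>)" using FS_END by simp
  have ev': "(u, q, b) \<in> set (stTrace (FS \<sigma>))" using ev unfolding mech_trace_def .
  show ?thesis
  proof (cases b)
    case False
    then have "(u, q, False) \<in> set (stTrace (FS \<sigma>))" using ev' by simp
    then have "u \<notin> Sets (FS \<sigma>)" using E unfolding END_def by blast
    then have "u \<notin> winners v ord B \<alpha> \<beta> \<epsilon> l \<sigma>" using winners_props(1) by blast
    then show ?thesis unfolding seller_util_def by simp
  next
    case True
    then have cq: "q < c u" using bne by simp
    have "stp (FS \<sigma>) u \<le> q" using E ev' unfolding END_def by fastforce
    then show ?thesis using cq unfolding seller_util_def payment_def by simp
  qed
qed

end


context bfm begin

lemma dominant:
  assumes uN: "u \<in> N"
  shows "seller_util v ord B \<alpha> \<beta> \<epsilon> l c (\<sigma>(u := d)) u \<le> seller_util v ord B \<alpha> \<beta> \<epsilon> l c (\<sigma>(u := truthful c u)) u"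
proof (cases "\<exists>q b. (u, q, b) \<in> set (mech_trace v ord B \<alpha> \<beta> \<epsilon> l (\<sigma>(u := d))) \<and> b \<noteq> (c u \<le> q)")
  case True
  then obtain q b where "(u, q, b) \<in> set (mech_trace v ord B \<alpha> \<beta> \<epsilon> l (\<sigma>(u := d)))" "b \<noteq> (c u \<le> q)" by blast
  then have "seller_util v ord B \<alpha> \<beta> \<epsilon> l c (\<sigma>(u := d)) u \<le> 0" by (rule util_le0[OF uN])
  then show ?thesis using IR[OF uN, of \<sigma>] by linarith
next
  case False
  let ?sd = "\<sigma>(u := d)" and ?st = "\<sigma>(u := truthful c u)"
  let ?tr = "stTrace (R ?sd (M ?sd))"
  have trdef: "?tr = mech_trace v ord B \<alpha> \<beta> \<epsilon> l ?sd" unfolding mech_trace_def final_state_def ..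
  have Td: "TRok ?sd ?tr" using FS_END[of "{}" ?sd] unfolding END_def final_state_def by simp
  have Tt: "TRok ?st ?tr" unfolding TRok_def
  proof (intro allI impI)
    fix k assume k: "k < length ?tr"
    obtain w q b where e: "?tr ! k = (w, q, b)" by (cases "?tr ! k") auto
    have b: "b = ?sd w (take k ?tr) q" using Td k e unfolding TRok_def by (metis fst_conv snd_conv)
    have ein: "(w, q, b) \<in> set ?tr" using k e by (metis nth_mem)
    have "b = ?st w (take k ?tr) q"
    proof (cases "w = u")
      case True
      have ein': "(u, q, b) \<in> set (mech_trace v ord B \<alpha> \<beta> \<epsilon> l ?sd)" using ein True trdef by simp
      have "b = (c u \<le> q)"
      proof (rule ccontr)
        assume "b \<noteq> (c u \<le> q)"
        with ein' have "\<exists>q b. (u, q, b) \<in> set (mech_trace v ord B \<alpha> \<beta> \<epsilon> l ?sd) \<and> b \<noteq> (c u \<le> q)" by blast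
        with False show False by blast
      qed
      then show ?thesis using True by (simp add: truthful_def)
    next
      case False then show ?thesis using b by simp
    qed
    then show "snd (snd (?tr ! k)) = ?st (fst (?tr ! k)) (take k ?tr) (fst (snd (?tr ! k)))" using e by simp
  qed
  have ag: "\<And>t. t \<le> M ?sd \<Longrightarrow> R ?st t = R ?sd t" by (rule rounds_agree[OF Tt])
  have MM0: "(LEAST t. 1 \<le> t \<and> stop_cond l (R ?st t)) = M ?sd"
  proof (rule Least_equality)
    show "1 \<le> M ?sd \<and> stop_cond l (R ?st (M ?sd))" using M_props(1,2)[of ?sd] ag[of "M ?sd"] by simp
    fix y assume y: "1 \<le> y \<and> stop_cond l (R ?st y)"
    show "M ?sd \<le> y"
    proof (rule ccontr)
      assume "\<not> M ?sd \<le> y"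
      then have "y < M ?sd" by simp
      then have "R ?st y = R ?sd y" using ag by simp
      then show False using y M_props(3)[of y ?sd] \<open>y < M ?sd\<close> by simp
    qed
  qed
  have MM: "M ?st = M ?sd" using MM0 unfolding num_rounds_def .
  have "FS ?st = FS ?sd" unfolding final_state_def MM using ag[of "M ?sd"] by simp
  then show ?thesis unfolding seller_util_def winners_def payment_def by simp
qed

lemma osp: "OSP N v ord B \<alpha> \<beta> \<epsilon> l c"
  unfolding OSP_def
proof (intro ballI allI impI)
  fix u d \<sigma>1 \<sigma>2 h1 h2 q b1 b2
  assume uN: "u \<in> N"
  assume H: "prefix (h1 @ [(u, q, b1)]) (mech_trace v ord B \<alpha> \<beta> \<epsilon> l (\<sigma>1(u := truthful c u))) \<and>
       prefix (h2 @ [(u, q, b2)]) (mech_trace v ord B \<alpha> \<beta> \<epsilon> l (\<sigma>2(u := d))) \<and>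
       own_view u h1 = own_view u h2 \<and> d h2 q \<noteq> truthful c u h1 q"
  let ?s2 = "\<sigma>2(u := d)"
  let ?tr = "mech_trace v ord B \<alpha> \<beta> \<epsilon> l ?s2"
  obtain zs where tr: "?tr = (h2 @ [(u, q, b2)]) @ zs" using H unfolding prefix_def by blast
  have T: "TRok ?s2 ?tr" using FS_END[of "{}" ?s2] unfolding END_def mech_trace_def by simp
  have "length h2 < length ?tr" using tr by simp
  then have "snd (snd (?tr ! length h2)) = ?s2 (fst (?tr ! length h2)) (take (length h2) ?tr) (fst (snd (?tr ! length h2)))"
    using T unfolding TRok_def by blast
  then have b2: "b2 = d h2 q" using tr by simp
  have ein: "(u, q, b2) \<in> set ?tr" using tr by simp
  have "b2 \<noteq> (c u \<le> q)" using b2 H by (simp add: truthful_def)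
  then have "seller_util v ord B \<alpha> \<beta> \<epsilon> l c ?s2 u \<le> 0" by (rule util_le0[OF uN ein])
  then show "seller_util v ord B \<alpha> \<beta> \<epsilon> l c ?s2 u \<le> seller_util v ord B \<alpha> \<beta> \<epsilon> l c (\<sigma>1(u := truthful c u)) u"
    using IR[OF uN, of \<sigma>1] by linarith
qed

end


context bfm begin

lemma M_bound:
  fixes K L :: real
  defines "K \<equiv> 2 + 2 / ln \<alpha>" and "L \<equiv> max 1 (ln (OPT N v c B / \<epsilon>))"
  shows "real (M (truthful c)) \<le> K * L"
proof -
  let ?s = "truthful c"
  have lnpos: "0 < ln \<alpha>" using al by simp
  have K2: "2 \<le> K" unfolding K_def using lnpos by simp
  have L1: "1 \<le> L" unfolding L_def by simp
  show ?thesis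
  proof (cases "M ?s \<le> 1")
    case True
    then have "real (M ?s) \<le> 1" by simp
    also have "1 \<le> K * L"
    proof -
      have "1 * 1 \<le> K * L" using K2 L1 by (intro mult_mono) auto
      then show ?thesis by simp
    qed
    finally show ?thesis .
  next
    case False
    define t where "t = M ?s - 2"
    have Mt: "M ?s = Suc (Suc t)" using False unfolding t_def by simp
    have "\<not> stop_cond l (R ?s (Suc t))" using M_props(3)[of "Suc t" ?s] Mt by simp
    then have h: "stHalt (R ?s (Suc t))" by (rule nostop_halt)
    have I: "INV (rho (Suc t)) N ?s (R ?s (Suc t)) []" using rounds_INV[of N ?s t] by simp
    have "rho (Suc t) < 2 * OPT N v c B" using INV_unpack(14)[OF I] h by simp
    moreover have "rho (Suc t) = \<epsilon> * \<alpha> ^ t" unfolding rho_def using al by simp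
    ultimately have lt: "\<epsilon> * \<alpha> ^ t < 2 * OPT N v c B" by simp
    have apos: "0 < \<alpha> ^ t" using al by simp
    have "0 < \<epsilon> * \<alpha> ^ t" using apos eps by simp
    then have "0 < OPT N v c B" using lt by simp
    then have Opos: "0 < OPT N v c B / \<epsilon>" using eps by simp
    have lt2: "\<alpha> ^ t < 2 * (OPT N v c B / \<epsilon>)" using lt eps by (simp add: field_simps)
    have "ln (\<alpha> ^ t) < ln (2 * (OPT N v c B / \<epsilon>))" using lt2 apos by simp
    also have "ln (2 * (OPT N v c B / \<epsilon>)) = ln 2 + ln (OPT N v c B / \<epsilon>)" by (subst ln_mult) (use Opos in auto)
    finally have "real t * ln \<alpha> < ln 2 + ln (OPT N v c B / \<epsilon>)" by (simp add: ln_realpow)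
    moreover have "ln 2 < (1::real)" by (rule ln_2_less_1)
    moreover have "ln (OPT N v c B / \<epsilon>) \<le> L" unfolding L_def by simp
    ultimately have "real t * ln \<alpha> < 2 * L" using L1 by linarith
    then have tl: "real t < 2 * L / ln \<alpha>" using lnpos by (simp add: field_simps)
    have "real (M ?s) = 2 + real t" using Mt by simp
    also have "\<dots> \<le> 2 * L + 2 * L / ln \<alpha>" using tl L1 by linarith
    also have "\<dots> = K * L" unfolding K_def by (simp add: field_simps)
    finally show ?thesis .
  qed
qed

lemma runtime_bound:
  "real (total_steps v ord B \<alpha> \<beta> \<epsilon> l (truthful c))
     \<le> (6 * (2 + 2 / ln \<alpha>) + 5) * (real (card N) + 1) * max 1 (ln (OPT N v c B / \<epsilon>))"
proof -
  let ?s = "truthful c"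
  define K where "K = 2 + 2 / ln \<alpha>"
  define L where "L = max 1 (ln (OPT N v c B / \<epsilon>))"
  define n where "n = card N"
  have nlen: "length ord = n" unfolding n_def using dist setord distinct_card by fastforce
  have lnpos: "0 < ln \<alpha>" using al by simp
  have K2: "2 \<le> K" unfolding K_def using lnpos by simp
  have L1: "1 \<le> L" unfolding L_def by simp
  have MLb: "real (M ?s) \<le> K * L" unfolding K_def L_def by (rule M_bound)
  have lc: "length (candidates l (FS ?s)) = 2 * l + 1" unfolding candidates_def by simp
  have st: "stSteps (FS ?s) \<le> n + M ?s * ((2 * l + 2) * n)"
    unfolding final_state_def using rounds_steps[of v ord B \<alpha> \<beta> \<epsilon> l ?s "M ?s"] nlen by simp
  have "(2 * l + 2) * n \<le> 6 * n" using l2 by simp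
  then have "M ?s * ((2 * l + 2) * n) \<le> M ?s * (6 * n)" by (rule mult_le_mono2)
  then have tot: "total_steps v ord B \<alpha> \<beta> \<epsilon> l ?s \<le> n + M ?s * (6 * n) + 5"
    unfolding total_steps_def Let_def lc using st l2 by linarith
  then have "real (total_steps v ord B \<alpha> \<beta> \<epsilon> l ?s) \<le> real (n + M ?s * (6 * n) + 5)"
    by (simp only: of_nat_le_iff)
  also have "real (n + M ?s * (6 * n) + 5) = real n + real (M ?s) * (6 * real n) + 5" by simp
  also have "\<dots> \<le> (real n + 1) * (6 * real (M ?s) + 5)" by (simp add: algebra_simps)
  also have "\<dots> \<le> (real n + 1) * (6 * (K * L) + 5 * L)"
    using MLb L1 by (intro mult_left_mono) auto
  also have "\<dots> = (6 * K + 5) * (real n + 1) * L" by (simp add: algebra_simps)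
  finally show ?thesis by (simp add: K_def L_def n_def)
qed

end

context bfm begin

lemma main_result: "
      (\<forall>\<sigma>. \<exists>t\<ge>1. stop_cond l (rounds v ord B \<alpha> \<beta> \<epsilon> l \<sigma> t)) \<and>
      (\<forall>\<sigma>. sum (payment v ord B \<alpha> \<beta> \<epsilon> l \<sigma>) (winners v ord B \<alpha> \<beta> \<epsilon> l \<sigma>) \<le> B) \<and>
      (\<forall>\<sigma>. 0 \<le> v (winners v ord B \<alpha> \<beta> \<epsilon> l \<sigma>)
                 - sum (payment v ord B \<alpha> \<beta> \<epsilon> l \<sigma>) (winners v ord B \<alpha> \<beta> \<epsilon> l \<sigma>)) \<and>
      OSP N v ord B \<alpha> \<beta> \<epsilon> l c \<and>
      (\<forall>u\<in>N. \<forall>\<sigma> d. seller_util v ord B \<alpha> \<beta> \<epsilon> l c (\<sigma>(u := d)) u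
                      \<le> seller_util v ord B \<alpha> \<beta> \<epsilon> l c (\<sigma>(u := truthful c u)) u) \<and>
      (\<forall>u\<in>N. \<forall>\<sigma>. 0 \<le> seller_util v ord B \<alpha> \<beta> \<epsilon> l c (\<sigma>(u := truthful c u)) u) \<and>
      real (total_steps v ord B \<alpha> \<beta> \<epsilon> l (truthful c))
        \<le> (6 * (2 + 2 / ln \<alpha>) + 5) * (real (card N) + 1) * max 1 (ln (OPT N v c B / \<epsilon>))"
proof (intro conjI)
  show "\<forall>\<sigma>. \<exists>t\<ge>1. stop_cond l (rounds v ord B \<alpha> \<beta> \<epsilon> l \<sigma> t)" using terminates by blast
  show "\<forall>\<sigma>. sum (payment v ord B \<alpha> \<beta> \<epsilon> l \<sigma>) (winners v ord B \<alpha> \<beta> \<epsilon> l \<sigma>) \<le> B"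
    using winners_props(2) by blast
  show "\<forall>\<sigma>. 0 \<le> v (winners v ord B \<alpha> \<beta> \<epsilon> l \<sigma>)
                 - sum (payment v ord B \<alpha> \<beta> \<epsilon> l \<sigma>) (winners v ord B \<alpha> \<beta> \<epsilon> l \<sigma>)"
    using winners_props(3) by blast
  show "OSP N v ord B \<alpha> \<beta> \<epsilon> l c" by (rule osp)
  show "\<forall>u\<in>N. \<forall>\<sigma> d. seller_util v ord B \<alpha> \<beta> \<epsilon> l c (\<sigma>(u := d)) u
                      \<le> seller_util v ord B \<alpha> \<beta> \<epsilon> l c (\<sigma>(u := truthful c u)) u"
    using dominant by blast
  show "\<forall>u\<in>N. \<forall>\<sigma>. 0 \<le> seller_util v ord B \<alpha> \<beta> \<epsilon> l c (\<sigma>(u := truthful c u)) u"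
    using IR by blast
  show "real (total_steps v ord B \<alpha> \<beta> \<epsilon> l (truthful c))
        \<le> (6 * (2 + 2 / ln \<alpha>) + 5) * (real (card N) + 1) * max 1 (ln (OPT N v c B / \<epsilon>))"
    by (rule runtime_bound)
qed

end

theorem theorem4p1:
  fixes \<alpha> :: real
  assumes "1 < \<alpha>"
  shows "\<exists>C :: real. \<forall>(N :: 'a set) ord v c B \<beta> \<epsilon> l.
    valid_instance N ord v c B \<alpha> \<beta> \<epsilon> l \<longrightarrow>
      (\<forall>\<sigma>. \<exists>t\<ge>1. stop_cond l (rounds v ord B \<alpha> \<beta> \<epsilon> l \<sigma> t)) \<and>
      (\<forall>\<sigma>. sum (payment v ord B \<alpha> \<beta> \<epsilon> l \<sigma>) (winners v ord B \<alpha> \<beta> \<epsilon> l \<sigma>) \<le> B) \<and>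
      (\<forall>\<sigma>. 0 \<le> v (winners v ord B \<alpha> \<beta> \<epsilon> l \<sigma>)
                 - sum (payment v ord B \<alpha> \<beta> \<epsilon> l \<sigma>) (winners v ord B \<alpha> \<beta> \<epsilon> l \<sigma>)) \<and>
      OSP N v ord B \<alpha> \<beta> \<epsilon> l c \<and>
      (\<forall>u\<in>N. \<forall>\<sigma> d. seller_util v ord B \<alpha> \<beta> \<epsilon> l c (\<sigma>(u := d)) u
                      \<le> seller_util v ord B \<alpha> \<beta> \<epsilon> l c (\<sigma>(u := truthful c u)) u) \<and>
      (\<forall>u\<in>N. \<forall>\<sigma>. 0 \<le> seller_util v ord B \<alpha> \<beta> \<epsilon> l c (\<sigma>(u := truthful c u)) u) \<and>
      real (total_steps v ord B \<alpha> \<beta> \<epsilon> l (truthful c))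
        \<le> C * (real (card N) + 1) * max 1 (ln (OPT N v c B / \<epsilon>))"
  proof -
  show ?thesis
    apply (rule exI[of _ "6 * (2 + 2 / ln \<alpha>) + 5"])
    apply (intro allI impI)
    apply (rule bfm.main_result)
    apply (simp add: bfm_def)
    done
qed

end
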